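(* Under the standing assumptions, suppose $\varphi$ is lower semicontinuous on $X$. Let $\rho_k\to\infty$ and $\sigma_k\to 0$ with $\rho_k,\sigma_k>0$. Then for every sequence $\{x_k\}\subset X$ with $x_k\to\bar x$, $$\liminf_{k\to\infty}\varphi_{\rho_k,\sigma_k}(x_k)\ge\varphi(\bar x).$$
   Context: Standing assumptions: $X\subset\mathbb{R}^n$ and $Y\subset\mathbb{R}^m$ are nonempty, convex and compact. $f:X\times Y\to\mathbb{R}$ is continuously differentiable with Lipschitz continuous gradient on $X\times Y$, $f(x,\cdot)$ concave on $Y$. $c=(c_1,\dots,c_p)$ has continuously differentiable components with Lipschitz gradients, each $c_i(x,\cdot)$ convex on $Y$. For every $x\in X$, $\Theta(x):=\{y\in Y: c(x,y)\le 0\}\neq\emptyset$. Notation: $[z]_+=\max\{z,0\}$ componentwise; $\varphi(x):=\max\{f(x,y): y\in\Theta(x)\}$; $\psi_{\rho,\sigma}(x,y):=f(x,y)-\frac{\rho}{2}\|[c(x,y)]_+\|^2-\frac{\sigma}{2}\|y\|^2$; $\varphi_{\rho,\sigma}(x):=\max_{y\in Y}\psi_{\rho,\sigma}(x,y)$. *)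

theory Defs
  imports "HOL-Analysis.Analysis"
begin

text \<open>Constraint map c = (c_0,...,c_{p-1}) is represented by c :: nat => 'a => 'b => real,
  with components indexed by i < p.\<close>

definition Theta :: "'b set \<Rightarrow> nat \<Rightarrow> (nat \<Rightarrow> 'a \<Rightarrow> 'b \<Rightarrow> real) \<Rightarrow> 'a \<Rightarrow> 'b set" where
  "Theta Y p c x = {y \<in> Y. \<forall>i<p. c i x y \<le> 0}"

definition phi :: "('a \<Rightarrow> 'b \<Rightarrow> real) \<Rightarrow> 'b set \<Rightarrow> nat \<Rightarrow> (nat \<Rightarrow> 'a \<Rightarrow> 'b \<Rightarrow> real) \<Rightarrow> 'a \<Rightarrow> real" where
  "phi f Y p c x = Sup (f x ` Theta Y p c x)"

definition psi :: "('a \<Rightarrow> 'b::real_normed_vector \<Rightarrow> real) \<Rightarrow> nat \<Rightarrow> (nat \<Rightarrow> 'a \<Rightarrow> 'b \<Rightarrow> real)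
    \<Rightarrow> real \<Rightarrow> real \<Rightarrow> 'a \<Rightarrow> 'b \<Rightarrow> real" where
  "psi f p c \<rho> \<sigma> x y = f x y - \<rho> / 2 * (\<Sum>i<p. (max (c i x y) 0)\<^sup>2) - \<sigma> / 2 * (norm y)\<^sup>2"

definition phi_pen :: "('a \<Rightarrow> 'b::real_normed_vector \<Rightarrow> real) \<Rightarrow> 'b set \<Rightarrow> nat \<Rightarrow> (nat \<Rightarrow> 'a \<Rightarrow> 'b \<Rightarrow> real)
    \<Rightarrow> real \<Rightarrow> real \<Rightarrow> 'a \<Rightarrow> real" where
  "phi_pen f Y p c \<rho> \<sigma> x = Sup (psi f p c \<rho> \<sigma> x ` Y)"

definition lsc_on :: "'a::metric_space set \<Rightarrow> ('a \<Rightarrow> real) \<Rightarrow> bool" where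
  "lsc_on X g \<longleftrightarrow> (\<forall>x\<in>X. \<forall>e>0. \<exists>d>0. \<forall>x'\<in>X. dist x' x < d \<longrightarrow> g x - e < g x')"

end

theory Submission
  imports Defs
begin

theorem lemma2p3:
  fixes X :: "'a::euclidean_space set" and Y :: "'b::euclidean_space set"
    and f :: "'a \<Rightarrow> 'b \<Rightarrow> real" and p :: nat and c :: "nat \<Rightarrow> 'a \<Rightarrow> 'b \<Rightarrow> real"
    and Df :: "'a \<times> 'b \<Rightarrow> 'a \<times> 'b" and Dc :: "nat \<Rightarrow> 'a \<times> 'b \<Rightarrow> 'a \<times> 'b"
    and Lf :: real and Lc :: real
    and \<rho> \<sigma> :: "nat \<Rightarrow> real" and x :: "nat \<Rightarrow> 'a" and xbar :: 'a
  assumes X: "X \<noteq> {}" "convex X" "compact X"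
    and Y: "Y \<noteq> {}" "convex Y" "compact Y"
    and f_diff: "\<And>z. z \<in> X \<times> Y \<Longrightarrow>
       ((\<lambda>w. f (fst w) (snd w)) has_derivative (\<lambda>h. Df z \<bullet> h)) (at z)"
    and f_lip: "Lf-lipschitz_on (X \<times> Y) Df"
    and f_concave: "\<And>u. u \<in> X \<Longrightarrow> concave_on Y (f u)"
    and c_diff: "\<And>i z. i < p \<Longrightarrow> z \<in> X \<times> Y \<Longrightarrow>
       ((\<lambda>w. c i (fst w) (snd w)) has_derivative (\<lambda>h. Dc i z \<bullet> h)) (at z)"
    and c_lip: "\<And>i. i < p \<Longrightarrow> Lc-lipschitz_on (X \<times> Y) (Dc i)"
    and c_convex: "\<And>i u. i < p \<Longrightarrow> u \<in> X \<Longrightarrow> convex_on Y (c i u)"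
    and Theta_ne: "\<And>u. u \<in> X \<Longrightarrow> Theta Y p c u \<noteq> {}"
    and lsc: "lsc_on X (phi f Y p c)"
    and rho: "filterlim \<rho> at_top sequentially" "\<And>k. \<rho> k > 0"
    and sigma: "\<sigma> \<longlonglongrightarrow> 0" "\<And>k. \<sigma> k > 0"
    and xk: "\<And>k. x k \<in> X" "x \<longlonglongrightarrow> xbar"
  shows "liminf (\<lambda>k. ereal (phi_pen f Y p c (\<rho> k) (\<sigma> k) (x k))) \<ge> ereal (phi f Y p c xbar)"
proof -
  have xbarX: "xbar \<in> X"
    using xk compact_imp_closed[OF X(3)] closed_sequentially by blast
  have contf: "continuous_on (X \<times> Y) (\<lambda>w. f (fst w) (snd w))"
  proof (rule continuous_at_imp_continuous_on, rule ballI)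
    fix z assume "z \<in> X \<times> Y"
    from has_derivative_continuous[OF f_diff[OF this]]
    show "isCont (\<lambda>w. f (fst w) (snd w)) z" .
  qed
  have "compact ((\<lambda>w. f (fst w) (snd w)) ` (X \<times> Y))"
    using compact_continuous_image[OF contf] compact_Times[OF X(3) Y(3)] by blast
  then obtain Bf where Bf: "\<And>u y. u \<in> X \<Longrightarrow> y \<in> Y \<Longrightarrow> \<bar>f u y\<bar> \<le> Bf"
    using compact_imp_bounded bounded_real by fastforce
  obtain B where B: "\<And>y. y \<in> Y \<Longrightarrow> norm y \<le> B"
    using compact_imp_bounded[OF Y(3)] bounded_iff by blast
  define M where "M = B\<^sup>2"
  have psi_le: "psi f p c (\<rho> k) (\<sigma> k) (x k) y \<le> Bf" if "y \<in> Y" for k y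
  proof -
    have "0 \<le> \<rho> k / 2 * (\<Sum>i<p. (max (c i (x k) y) 0)\<^sup>2)"
      using rho(2)[of k] by (intro mult_nonneg_nonneg sum_nonneg) auto
    moreover have "0 \<le> \<sigma> k / 2 * (norm y)\<^sup>2" using sigma(2)[of k] by simp
    ultimately show ?thesis using Bf[OF xk(1) that, of k] unfolding psi_def by linarith
  qed
  have key: "phi f Y p c (x k) - \<sigma> k / 2 * M \<le> phi_pen f Y p c (\<rho> k) (\<sigma> k) (x k)" for k
  proof -
    have bdd: "bdd_above (psi f p c (\<rho> k) (\<sigma> k) (x k) ` Y)"
      using psi_le by (auto intro!: bdd_aboveI)
    have "f (x k) y \<le> phi_pen f Y p c (\<rho> k) (\<sigma> k) (x k) + \<sigma> k / 2 * M"
      if y: "y \<in> Theta Y p c (x k)" for y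
    proof -
      have yY: "y \<in> Y" and cy: "\<And>i. i < p \<Longrightarrow> c i (x k) y \<le> 0"
        using y unfolding Theta_def by auto
      have "(\<Sum>i<p. (max (c i (x k) y) 0)\<^sup>2) = 0"
        using cy by (intro sum.neutral) (simp add: max_def)
      hence "psi f p c (\<rho> k) (\<sigma> k) (x k) y = f (x k) y - \<sigma> k / 2 * (norm y)\<^sup>2"
        unfolding psi_def by simp
      moreover have "(norm y)\<^sup>2 \<le> M" unfolding M_def
        using B[OF yY] by (intro power_mono) auto
      moreover have "psi f p c (\<rho> k) (\<sigma> k) (x k) y \<le> phi_pen f Y p c (\<rho> k) (\<sigma> k) (x k)"
        unfolding phi_pen_def using bdd yY by (intro cSUP_upper)
      moreover have "\<sigma> k / 2 * (norm y)\<^sup>2 \<le> \<sigma> k / 2 * M"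
        using sigma(2)[of k] calculation(2) by (intro mult_left_mono) auto
      ultimately show ?thesis by linarith
    qed
    hence "phi f Y p c (x k) \<le> phi_pen f Y p c (\<rho> k) (\<sigma> k) (x k) + \<sigma> k / 2 * M"
      unfolding phi_def using Theta_ne[OF xk(1)] by (intro cSUP_least) auto
    thus ?thesis by simp
  qed
  have ev: "eventually (\<lambda>k. phi f Y p c xbar - e < phi_pen f Y p c (\<rho> k) (\<sigma> k) (x k)) sequentially"
    if e: "e > 0" for e
  proof -
    obtain d where d: "d > 0" "\<And>x'. x' \<in> X \<Longrightarrow> dist x' xbar < d \<Longrightarrow>
        phi f Y p c xbar - e/2 < phi f Y p c x'"
      using lsc xbarX e unfolding lsc_on_def by (meson half_gt_zero)
    have e1: "eventually (\<lambda>k. dist (x k) xbar < d) sequentially"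
      using xk(2) d(1) tendsto_iff by blast
    have lim0: "(\<lambda>k. \<sigma> k / 2 * M) \<longlonglongrightarrow> 0 / 2 * M"
      by (intro tendsto_intros sigma(1)) simp
    have e2: "eventually (\<lambda>k. \<sigma> k / 2 * M < e/2) sequentially"
      using order_tendstoD(2)[OF lim0, of "e/2"] e by simp
    show ?thesis using e1 e2
    proof eventually_elim
      case (elim k)
      then show ?case using d(2)[OF xk(1) elim(1)] key[of k] by linarith
    qed
  qed
  show ?thesis
  proof (subst le_Liminf_iff, intro allI impI)
    fix y assume y: "y < ereal (phi f Y p c xbar)"
    show "eventually (\<lambda>k. y < ereal (phi_pen f Y p c (\<rho> k) (\<sigma> k) (x k))) sequentially"
    proof (cases y)
      case (real r)
      with y have "r < phi f Y p c xbar" by simp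
      hence "eventually (\<lambda>k. r < phi_pen f Y p c (\<rho> k) (\<sigma> k) (x k)) sequentially"
        using ev[of "phi f Y p c xbar - r"] by simp
      then show ?thesis by (simp add: real)
    next
      case PInf with y show ?thesis by simp
    next
      case MInf then show ?thesis by simp
    qed
  qed
qed

end
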